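(* Let ${\mathbb K}$ be a field, $n\geqslant 2$ and $N$ a positive integer. Let $L$ be a set of lines of $\mathrm{AG}_n({\mathbb K})$, let $D\subseteq\mathrm{PG}_{n-1}({\mathbb K})$ be the set of directions of the lines of $L$, and let $S$ be a set of points of $\mathrm{AG}_n({\mathbb K})$ such that every line of $L$ is incident with at least $N$ points of $S$. If $D$ contains an $N^{n-1}$ grid then $$|S|\geqslant\binom{N+n-1}{n}.$$
   Context: The direction of an affine line $\{u+\lambda v:\lambda\in{\mathbb K}\}$ is the point $\langle v\rangle$ of $\mathrm{PG}_{n-1}({\mathbb K})$. An $N^{n-1}$ grid in $\mathrm{PG}_{n-1}({\mathbb K})$ is a point set which, with respect to a suitable basis, has the form $\{\langle(a_1,\ldots,a_{n-1},1)\rangle : a_i\in A_i\}$, where each $A_i\subseteq{\mathbb K}$ has size $N$. *)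

theory Defs
  imports Main
begin

text \<open>Vectors of K^n are represented as functions nat => K vanishing at indices >= n.\<close>

definition vecs :: "nat \<Rightarrow> (nat \<Rightarrow> 'a::field) set" where
  "vecs n = {v. \<forall>i\<ge>n. v i = 0}"

definition aline :: "(nat \<Rightarrow> 'a::field) \<Rightarrow> (nat \<Rightarrow> 'a) \<Rightarrow> (nat \<Rightarrow> 'a) set" where
  "aline u v = {(\<lambda>i. u i + c * v i) | c. True}"

definition is_line :: "nat \<Rightarrow> (nat \<Rightarrow> 'a::field) set \<Rightarrow> bool" where
  "is_line n l \<longleftrightarrow> (\<exists>u v. u \<in> vecs n \<and> v \<in> vecs n \<and> v \<noteq> (\<lambda>_. 0) \<and> l = aline u v)"

definition proj_point :: "(nat \<Rightarrow> 'a::field) \<Rightarrow> (nat \<Rightarrow> 'a) set" where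
  "proj_point v = {(\<lambda>i. c * v i) | c. c \<noteq> 0}"

definition line_dir :: "nat \<Rightarrow> (nat \<Rightarrow> 'a::field) set \<Rightarrow> (nat \<Rightarrow> 'a) set \<Rightarrow> bool" where
  "line_dir n l d \<longleftrightarrow> (\<exists>u v. u \<in> vecs n \<and> v \<in> vecs n \<and> v \<noteq> (\<lambda>_. 0) \<and> l = aline u v \<and> d = proj_point v)"

definition directions :: "nat \<Rightarrow> (nat \<Rightarrow> 'a::field) set set \<Rightarrow> (nat \<Rightarrow> 'a) set set" where
  "directions n L = {d. \<exists>l\<in>L. line_dir n l d}"

definition is_basis :: "nat \<Rightarrow> (nat \<Rightarrow> nat \<Rightarrow> 'a::field) \<Rightarrow> bool" where
  "is_basis n B \<longleftrightarrow> (\<forall>i<n. B i \<in> vecs n) \<and>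
     (\<forall>c. (\<forall>j. (\<Sum>i<n. c i * B i j) = 0) \<longrightarrow> (\<forall>i<n. c i = 0))"

text \<open>An N^(n-1) grid in PG_(n-1)(K): w.r.t. the basis B, the points
  <(a_1,...,a_(n-1),1)> with a_i in A_i, |A_i| = N.\<close>
definition is_grid :: "nat \<Rightarrow> nat \<Rightarrow> (nat \<Rightarrow> 'a::field) set set \<Rightarrow> bool" where
  "is_grid n N G \<longleftrightarrow> (\<exists>B A. is_basis n B \<and>
     (\<forall>i<n-1. finite (A i) \<and> card (A i) = N) \<and>
     G = {proj_point (\<lambda>j. (\<Sum>i<n-1. a i * B i j) + B (n-1) j) | a. \<forall>i<n-1. a i \<in> A i})"

end

theory Submission
  imports Defs "HOL-Computational_Algebra.Polynomial"
begin



lemma linsys: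
  fixes M :: "'e \<Rightarrow> 'v \<Rightarrow> 'a::field"
  assumes "finite E" "finite V" "card E < card V"
  shows "\<exists>c. (\<exists>v\<in>V. c v \<noteq> 0) \<and> (\<forall>e\<in>E. (\<Sum>v\<in>V. M e v * c v) = 0)"
  using assms
proof (induction E arbitrary: V M rule: finite_induct)
  case empty
  then obtain v where "v \<in> V" by fastforce
  then show ?case by (intro exI[of _ "\<lambda>_. 1"]) auto
next
  case (insert e E)
  show ?case
  proof (cases "\<forall>v\<in>V. M e v = 0")
    case True
    from insert.IH[of V M] insert.prems insert.hyps obtain c where
      c: "(\<exists>v\<in>V. c v \<noteq> 0)" "\<forall>e\<in>E. (\<Sum>v\<in>V. M e v * c v) = 0" by auto
    show ?thesis using c True by (intro exI[of _ c]) auto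
  next
    case False
    then obtain v0 where v0: "v0 \<in> V" "M e v0 \<noteq> 0" by auto
    define V' where "V' = V - {v0}"
    define M' where "M' = (\<lambda>e' v. M e' v - M e' v0 * M e v / M e v0)"
    have cV': "card V' = card V - 1" using v0 insert.prems by (simp add: V'_def)
    have "card E < card V'" using insert.prems insert.hyps cV' by simp
    with insert.IH[of V' M'] insert.prems obtain c' where
      c': "(\<exists>v\<in>V'. c' v \<noteq> 0)" "\<forall>e\<in>E. (\<Sum>v\<in>V'. M' e v * c' v) = 0"
      by (auto simp: V'_def)
    define c where "c = c'(v0 := - (\<Sum>v\<in>V'. M e v * c' v) / M e v0)"
    have split: "(\<Sum>v\<in>V. f v) = f v0 + (\<Sum>v\<in>V'. f v)" for f :: "'v \<Rightarrow> 'a"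
      using v0 insert.prems by (simp add: V'_def sum.remove)
    have cV'eq: "(\<Sum>v\<in>V'. g v * c v) = (\<Sum>v\<in>V'. g v * c' v)" for g
      by (intro sum.cong) (auto simp: c_def V'_def)
    have "\<forall>e'\<in>insert e E. (\<Sum>v\<in>V. M e' v * c v) = 0"
    proof
      fix e' assume "e' \<in> insert e E"
      then show "(\<Sum>v\<in>V. M e' v * c v) = 0"
      proof
        assume "e' = e"
        then show ?thesis using v0 by (simp add: split cV'eq) (simp add: c_def)
      next
        assume "e' \<in> E"
        then have "(\<Sum>v\<in>V'. M' e' v * c' v) = 0" using c' by auto
        also have "(\<Sum>v\<in>V'. M' e' v * c' v) = (\<Sum>v\<in>V'. M e' v * c' v)
            - M e' v0 / M e v0 * (\<Sum>v\<in>V'. M e v * c' v)"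
          by (simp add: M'_def algebra_simps sum_subtractf sum_distrib_left)
        finally show ?thesis using v0 by (simp add: split cV'eq) (simp add: c_def field_simps)
      qed
    qed
    moreover have "\<exists>v\<in>V. c v \<noteq> 0" using c' by (auto simp: c_def V'_def)
    ultimately show ?thesis by blast
  qed
qed




definition mons :: "nat \<Rightarrow> nat \<Rightarrow> (nat \<Rightarrow> nat) set" where
  "mons n D = {\<alpha>. (\<forall>i\<ge>n. \<alpha> i = 0) \<and> (\<Sum>i<n. \<alpha> i) \<le> D}"

lemma mons_0: "mons 0 D = {\<lambda>_. 0}"
  by (auto simp: mons_def)

lemma mons_D0: "mons n 0 = {\<lambda>_. 0}"
proof -
  have "\<alpha> = (\<lambda>_. 0)" if "\<forall>i\<ge>n. \<alpha> i = 0" "(\<Sum>i<n. \<alpha> i) = 0" for \<alpha> :: "nat \<Rightarrow> nat"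
  proof
    fix i show "\<alpha> i = 0" using that by (cases "i < n") auto
  qed
  then show ?thesis by (auto simp: mons_def)
qed

lemma mons_Suc_Suc:
  "mons (Suc n) (Suc D) = mons n (Suc D) \<union> (\<lambda>\<alpha>. \<alpha>(n := Suc (\<alpha> n))) ` mons (Suc n) D"
proof (intro equalityI subsetI)
  fix \<alpha> assume a: "\<alpha> \<in> mons (Suc n) (Suc D)"
  show "\<alpha> \<in> mons n (Suc D) \<union> (\<lambda>\<alpha>. \<alpha>(n := Suc (\<alpha> n))) ` mons (Suc n) D"
  proof (cases "\<alpha> n = 0")
    case True
    have "\<forall>i\<ge>n. \<alpha> i = 0"
    proof (intro allI impI)
      fix i assume "n \<le> i"
      then have "i = n \<or> Suc n \<le> i" by auto
      then show "\<alpha> i = 0" using a True by (auto simp: mons_def)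
    qed
    then have "\<alpha> \<in> mons n (Suc D)" using a True by (auto simp: mons_def)
    then show ?thesis by blast
  next
    case False
    define \<beta> where "\<beta> = \<alpha>(n := \<alpha> n - 1)"
    have s: "(\<Sum>i<n. \<beta> i) = (\<Sum>i<n. \<alpha> i)" by (intro sum.cong) (auto simp: \<beta>_def)
    have "\<beta> \<in> mons (Suc n) D" using a False s by (auto simp: mons_def \<beta>_def)
    moreover have "\<alpha> = \<beta>(n := Suc (\<beta> n))" using False by (auto simp: \<beta>_def)
    ultimately show ?thesis by blast
  qed
next
  fix \<alpha> assume "\<alpha> \<in> mons n (Suc D) \<union> (\<lambda>\<alpha>. \<alpha>(n := Suc (\<alpha> n))) ` mons (Suc n) D"
  then show "\<alpha> \<in> mons (Suc n) (Suc D)"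
  proof
    assume "\<alpha> \<in> mons n (Suc D)" then show ?thesis by (auto simp: mons_def)
  next
    assume "\<alpha> \<in> (\<lambda>\<alpha>. \<alpha>(n := Suc (\<alpha> n))) ` mons (Suc n) D"
    then obtain \<beta> where b: "\<beta> \<in> mons (Suc n) D" "\<alpha> = \<beta>(n := Suc (\<beta> n))" by auto
    have s: "(\<Sum>i<n. \<alpha> i) = (\<Sum>i<n. \<beta> i)" by (intro sum.cong) (auto simp: b)
    show ?thesis using b s by (auto simp: mons_def)
  qed
qed

lemma mons_card: "finite (mons n D) \<and> card (mons n D) = (D + n) choose n"
proof (induction n arbitrary: D)
  case 0
  then show ?case by (simp add: mons_0)
next
  case (Suc n)
  note IHn = Suc.IH
  show ?case
  proof (induction D)
    case 0
    then show ?case by (simp add: mons_D0)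
  next
    case (Suc D)
    have disj: "mons n (Suc D) \<inter> (\<lambda>\<alpha>. \<alpha>(n := Suc (\<alpha> n))) ` mons (Suc n) D = {}"
      by (auto simp: mons_def)
    have inj: "inj_on (\<lambda>\<alpha>. \<alpha>(n := Suc (\<alpha> n))) (mons (Suc n) D)"
    proof (rule inj_onI)
      fix x y :: "nat \<Rightarrow> nat" assume "x(n := Suc (x n)) = y(n := Suc (y n))"
      then have "\<forall>i. (x(n := Suc (x n))) i = (y(n := Suc (y n))) i" by simp
      then show "x = y" by (metis fun_upd_apply nat.inject ext)
    qed
    have "card (mons (Suc n) (Suc D)) = ((Suc D) + n choose n) + (D + Suc n choose Suc n)"
      unfolding mons_Suc_Suc
      using IHn[of "Suc D"] Suc.IH disj inj
      by (subst card_Un_disjoint) (auto simp: card_image)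
    also have "\<dots> = (Suc D + Suc n) choose Suc n" by simp
    finally show ?case unfolding mons_Suc_Suc using IHn[of "Suc D"] Suc.IH by simp
  qed
qed




lemma grid_lemma:
  fixes e :: "(nat \<Rightarrow> nat) \<Rightarrow> 'a::field" and A :: "nat \<Rightarrow> 'a set"
  assumes "finite F" "\<forall>\<beta>\<in>F. (\<forall>i\<ge>m. \<beta> i = 0) \<and> (\<forall>i<m. \<beta> i < N)"
    "\<forall>i<m. finite (A i) \<and> card (A i) = N"
    "\<forall>a. (\<forall>i<m. a i \<in> A i) \<longrightarrow> (\<Sum>\<beta>\<in>F. e \<beta> * (\<Prod>i<m. a i ^ \<beta> i)) = 0"
  shows "\<forall>\<beta>\<in>F. e \<beta> = 0"
  using assms
proof (induction m arbitrary: F e)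
  case 0
  have F0: "F \<subseteq> {\<lambda>_. 0}" using "0.prems"(2) by auto
  show ?case
  proof
    fix \<beta> assume b: "\<beta> \<in> F"
    then have "\<beta> = (\<lambda>_. 0)" using F0 by auto
    with b F0 have "F = {\<lambda>_. 0}" by auto
    have "(\<Sum>\<beta>\<in>F. e \<beta> * (\<Prod>i<0. (\<lambda>_. 0) i ^ \<beta> i)) = 0" using "0.prems"(4)[rule_format, of "\<lambda>_. 0"] by simp
    moreover have "(\<Sum>\<beta>\<in>F. e \<beta> * (\<Prod>i<0. (\<lambda>_. 0) i ^ \<beta> i)) = e (\<lambda>_. 0)"
      unfolding \<open>F = _\<close> by simp
    ultimately show "e \<beta> = 0" using \<open>\<beta> = _\<close> by simp
  qed
next
  case (Suc m)
  show ?case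
  proof
    fix \<beta>0 assume b0: "\<beta>0 \<in> F"
    define k where "k = \<beta>0 m"
    define Fk where "Fk = {\<beta>\<in>F. \<beta> m = k}"
    define G where "G = (\<lambda>\<beta>. \<beta>(m := 0)) ` Fk"
    define e' where "e' = (\<lambda>\<gamma>. e (\<gamma>(m := k)))"
    have injG: "inj_on (\<lambda>\<beta>. \<beta>(m := 0)) Fk"
    proof (rule inj_onI)
      fix x y assume "x \<in> Fk" "y \<in> Fk" "x(m := 0) = y(m := 0)"
      have "x = (x(m := 0))(m := k)" using \<open>x \<in> Fk\<close> by (simp add: Fk_def fun_eq_iff)
      moreover have "y = (y(m := 0))(m := k)" using \<open>y \<in> Fk\<close> by (simp add: Fk_def fun_eq_iff)
      ultimately show "x = y" using \<open>x(m := 0) = y(m := 0)\<close> by simp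
    qed
    have "\<beta>0 m < N" using b0 Suc.prems(2) lessI by blast
    then have N0: "N > 0" by simp
    have "\<forall>\<gamma>\<in>G. e' \<gamma> = 0"
    proof (rule Suc.IH)
      show "finite G" using Suc.prems(1) by (simp add: G_def Fk_def)
      show "\<forall>\<beta>\<in>G. (\<forall>i\<ge>m. \<beta> i = 0) \<and> (\<forall>i<m. \<beta> i < N)"
        using Suc.prems(2) by (auto simp: G_def Fk_def)
      show "\<forall>i<m. finite (A i) \<and> card (A i) = N" using Suc.prems(3) less_SucI by blast
      show "\<forall>a. (\<forall>i<m. a i \<in> A i) \<longrightarrow> (\<Sum>\<beta>\<in>G. e' \<beta> * (\<Prod>i<m. a i ^ \<beta> i)) = 0"
      proof (intro allI impI)
        fix a assume a: "\<forall>i<m. a i \<in> A i"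
        define p where "p = (\<Sum>\<beta>\<in>F. monom (e \<beta> * (\<Prod>i<m. a i ^ \<beta> i)) (\<beta> m))"
        have "p = 0"
        proof (rule poly_eqI_degree[where A = "A m"])
          fix x assume x: "x \<in> A m"
          have "poly p x = (\<Sum>\<beta>\<in>F. e \<beta> * (\<Prod>i<Suc m. (a(m := x)) i ^ \<beta> i))"
            unfolding p_def poly_sum poly_monom
          proof (intro sum.cong refl)
            fix \<beta>
            have "(\<Prod>i<m. (a(m := x)) i ^ \<beta> i) = (\<Prod>i<m. a i ^ \<beta> i)"
              by (intro prod.cong) simp_all
            then show "e \<beta> * (\<Prod>i<m. a i ^ \<beta> i) * x ^ \<beta> m = e \<beta> * (\<Prod>i<Suc m. (a(m := x)) i ^ \<beta> i)"
              by simp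
          qed
          also have "\<dots> = 0"
          proof -
            have "\<forall>i<Suc m. (a(m := x)) i \<in> A i" using a x by (auto simp: less_Suc_eq)
            then show ?thesis using Suc.prems(4) by blast
          qed
          finally show "poly p x = poly 0 x" by simp
        next
          have "degree p \<le> N - 1" unfolding p_def
          proof (rule degree_sum_le[OF Suc.prems(1)], rule order.trans[OF degree_monom_le])
            fix \<beta> assume "\<beta> \<in> F"
            then have "\<beta> m < N" using Suc.prems(2) by blast
            then show "\<beta> m \<le> N - 1" by linarith
          qed
          then show "degree p < card (A m)" using Suc.prems(3) N0 by auto
        next
          show "degree (0::'a poly) < card (A m)" using Suc.prems(3) N0 by auto
        qed
        then have "0 = coeff p k" by simp
        also have "\<dots> = (\<Sum>\<beta>\<in>F. if \<beta> m = k then e \<beta> * (\<Prod>i<m. a i ^ \<beta> i) else 0)"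
          unfolding p_def coeff_sum by simp
        also have "\<dots> = (\<Sum>\<beta>\<in>Fk. e \<beta> * (\<Prod>i<m. a i ^ \<beta> i))"
          unfolding Fk_def using Suc.prems(1) by (simp add: sum.If_cases Int_def)
        also have "\<dots> = (\<Sum>\<beta>\<in>G. e' \<beta> * (\<Prod>i<m. a i ^ \<beta> i))"
          unfolding G_def
        proof (subst sum.reindex[OF injG], intro sum.cong refl)
          fix \<beta> assume "\<beta> \<in> Fk"
          then have "\<beta>(m := 0, m := k) = \<beta>" by (auto simp: Fk_def)
          moreover have "(\<Prod>i<m. a i ^ (\<beta>(m := 0)) i) = (\<Prod>i<m. a i ^ \<beta> i)" by (intro prod.cong) auto
          ultimately show "e \<beta> * (\<Prod>i<m. a i ^ \<beta> i) = ((\<lambda>\<beta>. e' \<beta> * (\<Prod>i<m. a i ^ \<beta> i)) \<circ> (\<lambda>\<beta>. \<beta>(m := 0))) \<beta>"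
            unfolding e'_def o_def by simp
        qed
        finally show "(\<Sum>\<beta>\<in>G. e' \<beta> * (\<Prod>i<m. a i ^ \<beta> i)) = 0" by simp
      qed
    qed
    moreover have "\<beta>0(m := 0) \<in> G" using b0 by (auto simp: G_def Fk_def k_def)
    ultimately have "e' (\<beta>0(m := 0)) = 0" by blast
    moreover have "\<beta>0(m := 0, m := k) = \<beta>0" by (simp add: k_def)
    ultimately show "e \<beta>0 = 0" by (simp add: e'_def)
  qed
qed




lemma basis_unique:
  assumes "is_basis n B" "(\<lambda>j. \<Sum>i<n. t i * B i j) = (\<lambda>j. \<Sum>i<n. s i * B i j)" "i < n"
  shows "t i = s i"
proof -
  have "\<forall>j. (\<Sum>i<n. (t i - s i) * B i j) = 0"
  proof
    fix j
    have "(\<Sum>i<n. t i * B i j) = (\<Sum>i<n. s i * B i j)" using assms(2) by meson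
    then show "(\<Sum>i<n. (t i - s i) * B i j) = 0"
      by (simp add: algebra_simps sum_subtractf)
  qed
  moreover have "\<forall>c. (\<forall>j. (\<Sum>i<n. c i * B i j) = 0) \<longrightarrow> (\<forall>i<n. c i = 0)"
    using assms(1) unfolding is_basis_def by blast
  ultimately have "\<forall>i<n. t i - s i = 0" by (rule_tac mp[OF spec[of _ "\<lambda>i. t i - s i"]]) auto
  then show ?thesis using assms(3) by simp
qed

lemma basis_span:
  fixes B :: "nat \<Rightarrow> nat \<Rightarrow> 'a::field"
  assumes "is_basis n B" "x \<in> vecs n"
  shows "\<exists>t. x = (\<lambda>j. \<Sum>i<n. t i * B i j)"
proof -
  define M where "M = (\<lambda>j i. if i < n then B i j else x j)"
  obtain c where c: "\<exists>i\<in>{..<Suc n}. c i \<noteq> 0"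
    "\<forall>j\<in>{..<n}. (\<Sum>i\<in>{..<Suc n}. M j i * c i) = 0"
    using linsys[of "{..<n}" "{..<Suc n}" M] by auto
  have Bz: "B i j = 0" if "i < n" "j \<ge> n" for i j
    using assms(1) that unfolding is_basis_def vecs_def by auto
  have xz: "x j = 0" if "j \<ge> n" for j using assms(2) that unfolding vecs_def by auto
  have eq: "(\<Sum>i<n. c i * B i j) + c n * x j = 0" for j
  proof (cases "j < n")
    case True
    then have "(\<Sum>i\<in>{..<Suc n}. M j i * c i) = 0" using c(2) by auto
    moreover have "(\<Sum>i<n. M j i * c i) = (\<Sum>i<n. c i * B i j)"
      by (intro sum.cong) (auto simp: M_def)
    ultimately show ?thesis by (simp add: M_def mult.commute)
  next
    case False
    then show ?thesis using Bz xz by simp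
  qed
  have cn: "c n \<noteq> 0"
  proof
    assume "c n = 0"
    then have "\<forall>j. (\<Sum>i<n. c i * B i j) = 0" using eq by simp
    then have "\<forall>i<n. c i = 0" using assms(1) unfolding is_basis_def by blast
    with c(1) \<open>c n = 0\<close> show False by (auto simp: less_Suc_eq)
  qed
  have "x = (\<lambda>j. \<Sum>i<n. (- c i / c n) * B i j)"
  proof
    fix j
    have "(\<Sum>i<n. (- c i / c n) * B i j) = - (\<Sum>i<n. c i * B i j) / c n"
      by (simp add: sum_negf sum_divide_distrib)
    also have "\<dots> = x j" using eq[of j] cn by (simp add: field_simps add_eq_0_iff2)
    finally show "x j = (\<Sum>i<n. (- c i / c n) * B i j)" by simp
  qed
  then show ?thesis by (intro exI[of _ "\<lambda>i. - c i / c n"])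
qed

definition co :: "nat \<Rightarrow> (nat \<Rightarrow> nat \<Rightarrow> 'a::field) \<Rightarrow> (nat \<Rightarrow> 'a) \<Rightarrow> nat \<Rightarrow> 'a" where
  "co n B x = (SOME t. x = (\<lambda>j. \<Sum>i<n. t i * B i j))"

lemma co_eq:
  assumes "is_basis n B" "x \<in> vecs n"
  shows "x = (\<lambda>j. \<Sum>i<n. co n B x i * B i j)"
  using someI_ex[OF basis_span[OF assms]] unfolding co_def by blast

lemma co_unique:
  assumes "is_basis n B" "x = (\<lambda>j. \<Sum>i<n. t i * B i j)" "i < n"
  shows "co n B x i = t i"
proof -
  have "x \<in> vecs n" using assms(1,2) unfolding is_basis_def vecs_def by auto
  then show ?thesis using basis_unique[OF assms(1) _ assms(3), of "co n B x" t] co_eq[OF assms(1)] assms(2)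
    by metis
qed

lemma co_lin:
  assumes "is_basis n B" "u \<in> vecs n" "v \<in> vecs n" "i < n"
  shows "co n B (\<lambda>j. u j + c * v j) i = co n B u i + c * co n B v i"
proof (rule co_unique[OF assms(1) _ assms(4)])
  have u: "u j = (\<Sum>i<n. co n B u i * B i j)" for j using co_eq[OF assms(1,2)] by meson
  have v: "v j = (\<Sum>i<n. co n B v i * B i j)" for j using co_eq[OF assms(1,3)] by meson
  show "(\<lambda>j. u j + c * v j) = (\<lambda>j. \<Sum>i<n. (co n B u i + c * co n B v i) * B i j)"
    by (subst u, subst v) (simp add: algebra_simps sum.distrib sum_distrib_left)
qed

lemma coeff_mult_top:
  fixes p q :: "'a::comm_ring_1 poly"
  assumes "degree p \<le> m" "degree q \<le> k"
  shows "coeff (p * q) (m + k) = coeff p m * coeff q k"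
proof -
  have "coeff (p * q) (m + k) = (\<Sum>i\<le>m+k. coeff p i * coeff q (m + k - i))" by (rule coeff_mult)
  also have "\<dots> = coeff p m * coeff q (m + k - m) + (\<Sum>i\<in>{..m+k} - {m}. coeff p i * coeff q (m + k - i))"
    by (subst sum.remove[of _ m]) auto
  also have "(\<Sum>i\<in>{..m+k} - {m}. coeff p i * coeff q (m + k - i)) = 0"
  proof (rule sum.neutral, rule ballI)
    fix i assume "i \<in> {..m+k} - {m}"
    then have "i > m \<or> m + k - i > k" by auto
    then show "coeff p i * coeff q (m + k - i) = 0"
      using assms by (auto simp: coeff_eq_0)
  qed
  finally show ?thesis by simp
qed

lemma lin_power_top:
  fixes a b :: "'a::comm_ring_1"
  shows "degree ([:a, b:] ^ k) \<le> k \<and> coeff ([:a, b:] ^ k) k = b ^ k"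
proof (induction k)
  case 0 then show ?case by simp
next
  case (Suc k)
  have d1: "degree [:a, b:] \<le> 1" by simp
  have "degree ([:a, b:] ^ Suc k) \<le> degree [:a, b:] + degree ([:a, b:] ^ k)"
    by (simp only: power_Suc) (rule degree_mult_le)
  also have "\<dots> \<le> Suc k" using Suc d1 by simp
  moreover have "coeff ([:a, b:] ^ Suc k) (Suc k) = coeff [:a, b:] 1 * coeff ([:a, b:] ^ k) k"
    using coeff_mult_top[OF d1, of "[:a, b:] ^ k" k] Suc by simp
  ultimately show ?case using Suc by simp
qed

lemma lin_prod_top:
  fixes a b :: "nat \<Rightarrow> 'a::comm_ring_1"
  assumes "finite I"
  shows "degree (\<Prod>i\<in>I. [:a i, b i:] ^ k i) \<le> (\<Sum>i\<in>I. k i) \<and>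
         coeff (\<Prod>i\<in>I. [:a i, b i:] ^ k i) (\<Sum>i\<in>I. k i) = (\<Prod>i\<in>I. b i ^ k i)"
  using assms
proof (induction I rule: finite_induct)
  case empty then show ?case by simp
next
  case (insert x I)
  have h: "degree ([:a x, b x:] ^ k x) \<le> k x" "coeff ([:a x, b x:] ^ k x) (k x) = b x ^ k x"
    using lin_power_top by blast+
  have "degree (\<Prod>i\<in>insert x I. [:a i, b i:] ^ k i) \<le>
      degree ([:a x, b x:] ^ k x) + degree (\<Prod>i\<in>I. [:a i, b i:] ^ k i)"
    using insert by (simp add: degree_mult_le)
  also have "\<dots> \<le> (\<Sum>i\<in>insert x I. k i)" using insert h by simp
  finally show ?case
    using insert h coeff_mult_top[OF h(1), of "\<Prod>i\<in>I. [:a i, b i:] ^ k i" "\<Sum>i\<in>I. k i"] by simp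
qed




theorem theorem3p3:
  fixes L :: "(nat \<Rightarrow> 'a::field) set set" and S :: "(nat \<Rightarrow> 'a) set" and n N :: nat
  assumes "n \<ge> 2" and "N > 0"
    and "\<forall>l\<in>L. is_line n l"
    and "S \<subseteq> vecs n"
    and "\<forall>l\<in>L. \<exists>T. T \<subseteq> l \<inter> S \<and> finite T \<and> card T = N"
    and "\<exists>G. is_grid n N G \<and> G \<subseteq> directions n L"
  shows "infinite S \<or> (N + n - 1) choose n \<le> card S"
proof -
  from assms(6) obtain G where G: "is_grid n N G" "G \<subseteq> directions n L" by blast
  then obtain B A where BA: "is_basis n B" "\<forall>i<n-1. finite (A i) \<and> card (A i) = N"
    "G = {proj_point (\<lambda>j. (\<Sum>i<n-1. a i * B i j) + B (n-1) j) | a. \<forall>i<n-1. a i \<in> A i}"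
    unfolding is_grid_def by blast
  show ?thesis
  proof (rule ccontr)
    assume "\<not> ?thesis"
    then have fin: "finite S" and lt: "card S < (N + n - 1) choose n" by auto
    define D where "D = N - 1"
    define Mn where "Mn = mons n D"
    have Mn: "finite Mn" "card Mn = (N + n - 1) choose n"
      using mons_card[of n D] assms(2) by (auto simp: Mn_def D_def)
    define ev where "ev = (\<lambda>(\<alpha>::nat \<Rightarrow> nat) (t::nat \<Rightarrow> 'a). \<Prod>i<n. t i ^ \<alpha> i)"
    define cS where "cS = co n B"
    have "card S < card Mn" using lt Mn(2) by simp
    then have ex: "\<exists>c. (\<exists>\<alpha>\<in>Mn. c \<alpha> \<noteq> 0) \<and> (\<forall>x\<in>S. (\<Sum>\<alpha>\<in>Mn. ev \<alpha> (cS x) * c \<alpha>) = 0)"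
      using linsys[OF fin Mn(1), of "\<lambda>x \<alpha>. ev \<alpha> (cS x)"] by simp
    define c where "c = (SOME c. (\<exists>\<alpha>\<in>Mn. c \<alpha> \<noteq> 0) \<and> (\<forall>x\<in>S. (\<Sum>\<alpha>\<in>Mn. ev \<alpha> (cS x) * c \<alpha>) = 0))"
    have c0: "(\<exists>\<alpha>\<in>Mn. c \<alpha> \<noteq> 0) \<and> (\<forall>x\<in>S. (\<Sum>\<alpha>\<in>Mn. ev \<alpha> (cS x) * c \<alpha>) = 0)"
      unfolding c_def by (rule someI_ex[OF ex])
    note c = conjunct1[OF c0] conjunct2[OF c0]
    define dg where "dg = (\<lambda>\<alpha>::nat \<Rightarrow> nat. \<Sum>i<n. \<alpha> i)"
    define Supp where "Supp = {\<alpha>\<in>Mn. c \<alpha> \<noteq> 0}"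
    have Supp: "finite Supp" "Supp \<noteq> {}" using Mn(1) c(1) by (auto simp: Supp_def)
    define d where "d = Max (dg ` Supp)"
    have d_ge: "dg \<alpha> \<le> d" if "\<alpha> \<in> Supp" for \<alpha>
      unfolding d_def using Supp that by (intro Max_ge) auto
    have "d \<in> dg ` Supp" unfolding d_def using Supp by (intro Max_in) auto
    then obtain \<alpha>0 where \<alpha>0: "\<alpha>0 \<in> Supp" "dg \<alpha>0 = d" by auto
    have dD: "d \<le> D" using \<alpha>0 by (auto simp: Supp_def Mn_def mons_def dg_def)
    define Hd where "Hd = {\<alpha>\<in>Mn. dg \<alpha> = d}"
    have line: "(\<Sum>\<alpha>\<in>Hd. c \<alpha> * ev \<alpha> (cS v)) = 0"
      if hyp: "l \<in> L" "u \<in> vecs n" "v \<in> vecs n" "v \<noteq> (\<lambda>_. 0)" "l = aline u v" for l u v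
    proof -
      obtain T where T: "T \<subseteq> l \<inter> S" "finite T" "card T = N" using assms(5) hyp(1) by blast
      define f where "f = (\<lambda>x::'a. (\<lambda>i. u i + x * v i))"
      define R where "R = {x. f x \<in> T}"
      have injf: "inj f"
      proof (rule injI)
        fix x y assume fxy: "f x = f y"
        obtain i where vi: "v i \<noteq> 0" using hyp(4) by auto
        from fxy have "u i + x * v i = u i + y * v i" unfolding f_def by meson
        then show "x = y" using vi by simp
      qed
      have fR: "f ` R = T"
      proof
        show "f ` R \<subseteq> T" by (auto simp: R_def)
        show "T \<subseteq> f ` R"
        proof
          fix t assume "t \<in> T"
          then have "t \<in> aline u v" using T(1) hyp(5) by auto
          then obtain x where "t = f x" unfolding aline_def f_def by auto
          then show "t \<in> f ` R" using \<open>t \<in> T\<close> by (auto simp: R_def)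
        qed
      qed
      have injR: "inj_on f R" using injf by (simp add: inj_on_def inj_def)
      have finR: "finite R" using finite_imageD[of f R] fR T(2) injR by simp
      have cardR: "card R = N" using card_image[OF injR] fR T(3) by simp
      define P where "P = (\<lambda>\<alpha>. \<Prod>i<n. [:cS u i, cS v i:] ^ \<alpha> i)"
      have Ptop: "degree (P \<alpha>) \<le> dg \<alpha> \<and> coeff (P \<alpha>) (dg \<alpha>) = ev \<alpha> (cS v)" for \<alpha>
        using lin_prod_top[of "{..<n}" "cS u" "cS v" \<alpha>] by (simp add: P_def dg_def ev_def)
      define q where "q = (\<Sum>\<alpha>\<in>Mn. smult (c \<alpha>) (P \<alpha>))"
      have "q = 0"
      proof (rule poly_eqI_degree[where A = R])
        fix x assume "x \<in> R"
        then have fS: "f x \<in> S" using T(1) by (auto simp: R_def)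
        have "poly q x = (\<Sum>\<alpha>\<in>Mn. ev \<alpha> (cS (f x)) * c \<alpha>)"
          unfolding q_def poly_sum poly_smult
        proof (intro sum.cong refl)
          fix \<alpha>
          have "poly (P \<alpha>) x = ev \<alpha> (cS (f x))"
            unfolding P_def poly_prod ev_def
          proof (intro prod.cong refl)
            fix i assume "i \<in> {..<n}"
            then show "poly ([:cS u i, cS v i:] ^ \<alpha> i) x = cS (f x) i ^ \<alpha> i"
              using co_lin[OF BA(1) hyp(2,3), of i x] by (simp add: cS_def f_def)
          qed
          then show "c \<alpha> * poly (P \<alpha>) x = ev \<alpha> (cS (f x)) * c \<alpha>" by simp
        qed
        also have "\<dots> = 0" using c(2) fS by blast
        finally show "poly q x = poly 0 x" by simp
      next
        have "degree q \<le> d" unfolding q_def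
        proof (rule degree_sum_le[OF Mn(1)])
          fix \<alpha> assume a: "\<alpha> \<in> Mn"
          show "degree (smult (c \<alpha>) (P \<alpha>)) \<le> d"
          proof (cases "c \<alpha> = 0")
            case True then show ?thesis by simp
          next
            case False
            then have "dg \<alpha> \<le> d" using d_ge a by (auto simp: Supp_def)
            then show ?thesis using Ptop[of \<alpha>] degree_smult_le[of "c \<alpha>" "P \<alpha>"] by linarith
          qed
        qed
        then show "degree q < card R" using cardR dD assms(2) by (simp add: D_def)
      next
        show "degree (0::'a poly) < card R" using cardR assms(2) by simp
      qed
      then have "0 = coeff q d" by simp
      also have "\<dots> = (\<Sum>\<alpha>\<in>Mn. c \<alpha> * coeff (P \<alpha>) d)" unfolding q_def coeff_sum by simp
      also have "\<dots> = (\<Sum>\<alpha>\<in>Mn. if dg \<alpha> = d then c \<alpha> * ev \<alpha> (cS v) else 0)"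
      proof (rule sum.cong[OF refl])
        fix \<alpha> assume a: "\<alpha> \<in> Mn"
        show "c \<alpha> * coeff (P \<alpha>) d = (if dg \<alpha> = d then c \<alpha> * ev \<alpha> (cS v) else 0)"
        proof (cases "c \<alpha> = 0")
          case True then show ?thesis by simp
        next
          case False
          then have le: "dg \<alpha> \<le> d" using d_ge a by (auto simp: Supp_def)
          show ?thesis
          proof (cases "dg \<alpha> = d")
            case True then show ?thesis using Ptop[of \<alpha>] by simp
          next
            case False
            then have "degree (P \<alpha>) < d" using le Ptop[of \<alpha>] by linarith
            then show ?thesis using False by (simp add: coeff_eq_0)
          qed
        qed
      qed
      also have "\<dots> = (\<Sum>\<alpha>\<in>Hd. c \<alpha> * ev \<alpha> (cS v))"
        unfolding Hd_def using Mn(1) by (simp add: sum.If_cases Int_def)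
      finally show ?thesis by simp
    qed
    have n1: "n = Suc (n - 1)" using assms(1) by simp
    have gridv: "(\<Sum>\<alpha>\<in>Hd. c \<alpha> * (\<Prod>i<n-1. a i ^ \<alpha> i)) = 0" if a: "\<forall>i<n-1. a i \<in> A i" for a
    proof -
      define g where "g = (\<lambda>j. (\<Sum>i<n-1. a i * B i j) + B (n-1) j)"
      define ta where "ta = (\<lambda>i. if i < n-1 then a i else (1::'a))"
      have "proj_point g \<in> G" using a BA(3) unfolding g_def by auto
      then have "proj_point g \<in> directions n L" using G(2) by auto
      then obtain l u v where luv: "l \<in> L" "u \<in> vecs n" "v \<in> vecs n" "v \<noteq> (\<lambda>_. 0)"
        "l = aline u v" "proj_point g = proj_point v"
        unfolding directions_def line_dir_def by blast
      have "g \<in> proj_point g" unfolding proj_point_def by (auto intro!: exI[of _ 1])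
      then obtain k where k: "k \<noteq> 0" "g = (\<lambda>i. k * v i)" using luv(6) unfolding proj_point_def by auto
      have gsum: "g = (\<lambda>j. \<Sum>i<n. ta i * B i j)"
      proof
        fix j
        have "(\<Sum>i<n. ta i * B i j) = (\<Sum>i<n-1. ta i * B i j) + ta (n-1) * B (n-1) j"
          by (subst n1) (simp only: sum.lessThan_Suc)
        also have "(\<Sum>i<n-1. ta i * B i j) = (\<Sum>i<n-1. a i * B i j)"
          by (intro sum.cong) (auto simp: ta_def)
        finally show "g j = (\<Sum>i<n. ta i * B i j)" by (simp add: g_def ta_def)
      qed
      have cg: "cS g i = ta i" if "i < n" for i
        unfolding cS_def using co_unique[OF BA(1) gsum that] .
      have vsum: "v = (\<lambda>j. \<Sum>i<n. cS v i * B i j)" using co_eq[OF BA(1) luv(3)] by (simp add: cS_def)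
      have gsum2: "g = (\<lambda>j. \<Sum>i<n. (k * cS v i) * B i j)"
      proof
        fix j
        have "v j = (\<Sum>i<n. cS v i * B i j)" using vsum by meson
        then show "g j = (\<Sum>i<n. (k * cS v i) * B i j)"
          using k(2) by (simp add: sum_distrib_left mult.assoc)
      qed
      have cg2: "cS g i = k * cS v i" if "i < n" for i
        unfolding cS_def using co_unique[OF BA(1) gsum2 that] by (simp add: cS_def)
      have ev_scale: "ev \<alpha> ta = k ^ dg \<alpha> * ev \<alpha> (cS v)" for \<alpha>
      proof -
        have "ev \<alpha> ta = (\<Prod>i<n. (k * cS v i) ^ \<alpha> i)"
          unfolding ev_def by (intro prod.cong refl) (metis cg cg2 lessThan_iff)
        also have "\<dots> = (\<Prod>i<n. k ^ \<alpha> i) * (\<Prod>i<n. cS v i ^ \<alpha> i)"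
          by (simp add: power_mult_distrib prod.distrib)
        also have "\<dots> = k ^ dg \<alpha> * ev \<alpha> (cS v)" by (simp add: dg_def ev_def power_sum)
        finally show ?thesis .
      qed
      have ev_ta: "ev \<alpha> ta = (\<Prod>i<n-1. a i ^ \<alpha> i)" for \<alpha>
      proof -
        have "ev \<alpha> ta = (\<Prod>i<n-1. ta i ^ \<alpha> i) * ta (n-1) ^ \<alpha> (n-1)"
          unfolding ev_def by (subst n1) (simp only: prod.lessThan_Suc)
        also have "(\<Prod>i<n-1. ta i ^ \<alpha> i) = (\<Prod>i<n-1. a i ^ \<alpha> i)"
          by (intro prod.cong) (auto simp: ta_def)
        finally show ?thesis by (simp add: ta_def)
      qed
      have "(\<Sum>\<alpha>\<in>Hd. c \<alpha> * (\<Prod>i<n-1. a i ^ \<alpha> i)) = (\<Sum>\<alpha>\<in>Hd. c \<alpha> * ev \<alpha> ta)"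
        by (simp add: ev_ta)
      also have "\<dots> = (\<Sum>\<alpha>\<in>Hd. k ^ d * (c \<alpha> * ev \<alpha> (cS v)))"
        by (intro sum.cong refl) (simp add: ev_scale Hd_def mult_ac)
      also have "\<dots> = k ^ d * (\<Sum>\<alpha>\<in>Hd. c \<alpha> * ev \<alpha> (cS v))" by (simp add: sum_distrib_left)
      also have "\<dots> = 0" using line[OF luv(1-5)] by simp
      finally show ?thesis .
    qed
    define m where "m = n - 1"
    define r where "r = (\<lambda>\<alpha>::nat \<Rightarrow> nat. \<alpha>(m := 0))"
    define F where "F = r ` Hd"
    define e where "e = (\<lambda>\<beta>. c (\<beta>(m := d - (\<Sum>i<m. \<beta> i))))"
    have nm: "n = Suc m" using n1 by (simp add: m_def)
    have backr: "(r \<alpha>)(m := d - (\<Sum>i<m. (r \<alpha>) i)) = \<alpha>" if "\<alpha> \<in> Hd" for \<alpha>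
    proof -
      have s1: "(\<Sum>i<m. (r \<alpha>) i) = (\<Sum>i<m. \<alpha> i)" by (intro sum.cong) (auto simp: r_def)
      have "dg \<alpha> = (\<Sum>i<m. \<alpha> i) + \<alpha> m" unfolding dg_def nm by simp
      then have "d - (\<Sum>i<m. \<alpha> i) = \<alpha> m" using that unfolding Hd_def by auto
      then show ?thesis using s1 by (auto simp: r_def fun_eq_iff)
    qed
    have injr: "inj_on r Hd" by (rule inj_on_inverseI[of _ "\<lambda>\<beta>. \<beta>(m := d - (\<Sum>i<m. \<beta> i))"]) (rule backr)
    have HdMn: "Hd \<subseteq> Mn" by (auto simp: Hd_def)
    have "\<forall>\<beta>\<in>F. e \<beta> = 0"
    proof (rule grid_lemma[where m = m and N = N and A = A])
      show "finite F" using Mn(1) HdMn unfolding F_def by (meson finite_imageI finite_subset)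
      show "\<forall>\<beta>\<in>F. (\<forall>i\<ge>m. \<beta> i = 0) \<and> (\<forall>i<m. \<beta> i < N)"
      proof
        fix \<beta> assume "\<beta> \<in> F"
        then obtain \<alpha> where al: "\<alpha> \<in> Hd" "\<beta> = r \<alpha>" by (auto simp: F_def)
        have z: "\<forall>i\<ge>n. \<alpha> i = 0" and dga: "dg \<alpha> = d" using al(1) by (auto simp: Hd_def Mn_def mons_def)
        have "\<forall>i\<ge>m. \<beta> i = 0"
        proof (intro allI impI)
          fix i assume "m \<le> i"
          then have "i = m \<or> n \<le> i" using nm by auto
          then show "\<beta> i = 0" using z al(2) by (auto simp: r_def)
        qed
        moreover have "\<forall>i<m. \<beta> i < N"
        proof (intro allI impI)
          fix i assume "i < m"
          then have "\<beta> i = \<alpha> i" "i < n" using al(2) nm by (auto simp: r_def)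
          moreover have "\<alpha> i \<le> dg \<alpha>" unfolding dg_def using \<open>i < n\<close> by (intro member_le_sum) auto
          ultimately show "\<beta> i < N" using dga dD assms(2) by (simp add: D_def)
        qed
        ultimately show "(\<forall>i\<ge>m. \<beta> i = 0) \<and> (\<forall>i<m. \<beta> i < N)" by blast
      qed
      show "\<forall>i<m. finite (A i) \<and> card (A i) = N" using BA(2) by (simp add: m_def)
      show "\<forall>a. (\<forall>i<m. a i \<in> A i) \<longrightarrow> (\<Sum>\<beta>\<in>F. e \<beta> * (\<Prod>i<m. a i ^ \<beta> i)) = 0"
      proof (intro allI impI)
        fix a assume a: "\<forall>i<m. a i \<in> A i"
        have "(\<Sum>\<beta>\<in>F. e \<beta> * (\<Prod>i<m. a i ^ \<beta> i)) = (\<Sum>\<alpha>\<in>Hd. e (r \<alpha>) * (\<Prod>i<m. a i ^ r \<alpha> i))"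
          unfolding F_def by (simp add: sum.reindex[OF injr])
        also have "\<dots> = (\<Sum>\<alpha>\<in>Hd. c \<alpha> * (\<Prod>i<m. a i ^ \<alpha> i))"
        proof (intro sum.cong refl)
          fix \<alpha> assume "\<alpha> \<in> Hd"
          have "(\<Prod>i<m. a i ^ r \<alpha> i) = (\<Prod>i<m. a i ^ \<alpha> i)" by (intro prod.cong) (auto simp: r_def)
          then show "e (r \<alpha>) * (\<Prod>i<m. a i ^ r \<alpha> i) = c \<alpha> * (\<Prod>i<m. a i ^ \<alpha> i)"
            using backr[OF \<open>\<alpha> \<in> Hd\<close>] by (simp add: e_def)
        qed
        also have "\<dots> = 0" using gridv a by (simp add: m_def)
        finally show "(\<Sum>\<beta>\<in>F. e \<beta> * (\<Prod>i<m. a i ^ \<beta> i)) = 0" .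
      qed
    qed
    moreover have "\<alpha>0 \<in> Hd" using \<alpha>0 by (auto simp: Hd_def Supp_def)
    ultimately have "e (r \<alpha>0) = 0" by (auto simp: F_def)
    then have "c \<alpha>0 = 0" using backr[OF \<open>\<alpha>0 \<in> Hd\<close>] by (simp add: e_def)
    then show False using \<alpha>0 by (simp add: Supp_def)
  qed
qed


end
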